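(* For $s\in\mathcal S(0)$ and $\theta\in\Theta$ let $U_s(\theta)=\int_0^\theta s(x)\,dx+v(\theta)$ (the payoff of type $\theta$ under interim status $s$ when the lowest level is free and prices are nonnegative). Then $U_{1/2}(\theta)\ge U_s(\theta)$ for all $\theta\in\Theta$ and all $s\in\mathcal S(0)$ (where $U_{1/2}$ corresponds to $s\equiv\frac12$) if and only if $F(\theta)\le\theta/\bar\theta$ for all $\theta\in\Theta$. In particular, this holds whenever $f$ is nondecreasing on $\Theta$.
   Context: Let $0<\bar\theta<\infty$, $\Theta=[0,\bar\theta]$, $F$ a cdf on $\Theta$ with continuous, strictly positive density $f$, $dF=f\,d\theta$. The intrinsic value $v:\Theta\to[0,\infty)$ is differentiable. For bounded measurable $a,b$ on $\Theta$, write $b\in\mathrm{MPS}(a)$ if $\int_x^{\bar\theta}b\,dF\le\int_x^{\bar\theta}a\,dF$ for all $x\in\Theta$, with equality at $x=0$. $\mathcal S(0)$ is the set of nondecreasing $s:\Theta\to[0,1]$ with $s\in\mathrm{MPS}(F)$. *)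

theory Defs
  imports "HOL-Analysis.Analysis"
begin

definition MPS :: "(real \<Rightarrow> real) \<Rightarrow> real \<Rightarrow> (real \<Rightarrow> real) \<Rightarrow> (real \<Rightarrow> real) set" where
  "MPS f tb a = {b. (\<forall>x\<in>{0..tb}. integral {x..tb} (\<lambda>t. b t * f t) \<le> integral {x..tb} (\<lambda>t. a t * f t))
                   \<and> integral {0..tb} (\<lambda>t. b t * f t) = integral {0..tb} (\<lambda>t. a t * f t)}"

definition S0 :: "(real \<Rightarrow> real) \<Rightarrow> real \<Rightarrow> (real \<Rightarrow> real) \<Rightarrow> (real \<Rightarrow> real) set" where
  "S0 f tb F = {s. mono_on {0..tb} s \<and> (\<forall>\<theta>\<in>{0..tb}. 0 \<le> s \<theta> \<and> s \<theta> \<le> 1) \<and> s \<in> MPS f tb F}"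

definition U :: "(real \<Rightarrow> real) \<Rightarrow> (real \<Rightarrow> real) \<Rightarrow> real \<Rightarrow> real" where
  "U v s \<theta> = integral {0..\<theta>} s + v \<theta>"

end

theory Submission
  imports Defs
begin

lemma cheb:
  fixes g :: "real \<Rightarrow> real"
  assumes m: "mono_on {0..tb} g" and "0 \<le> \<theta>" "\<theta> \<le> tb"
  shows "tb * integral {0..\<theta>} g \<le> \<theta> * integral {0..tb} g"
proof -
  have i1: "g integrable_on {0..\<theta>}" 
    by (rule integrable_on_mono_on, rule mono_on_subset[OF m]) (use assms in auto)
  have i2: "g integrable_on {\<theta>..tb}" 
    by (rule integrable_on_mono_on, rule mono_on_subset[OF m]) (use assms in auto)
  have i: "g integrable_on {0..tb}" by (rule integrable_on_mono_on[OF m])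
  have c: "integral {0..\<theta>} g + integral {\<theta>..tb} g = integral {0..tb} g"
    using Henstock_Kurzweil_Integration.integral_combine[OF assms(2,3) i] .
  have a: "integral {0..\<theta>} g \<le> \<theta> * g \<theta>"
  proof -
    have "integral {0..\<theta>} g \<le> integral {0..\<theta>} (\<lambda>_. g \<theta>)"
      by (rule integral_le[OF i1]) (use m assms in \<open>auto simp: mono_on_def\<close>)
    then show ?thesis using assms by simp
  qed
  have b: "(tb - \<theta>) * g \<theta> \<le> integral {\<theta>..tb} g"
  proof -
    have "integral {\<theta>..tb} (\<lambda>_. g \<theta>) \<le> integral {\<theta>..tb} g"
      by (rule integral_le[OF _ i2]) (use m assms in \<open>auto simp: mono_on_def\<close>)
    then show ?thesis using assms by simp
  qed
  have "(tb - \<theta>) * integral {0..\<theta>} g \<le> (tb - \<theta>) * (\<theta> * g \<theta>)"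
    using a assms by (intro mult_left_mono) auto
  moreover have "\<theta> * ((tb - \<theta>) * g \<theta>) \<le> \<theta> * integral {\<theta>..tb} g"
    using b assms by (intro mult_left_mono) auto
  moreover have "\<theta> * integral {0..tb} g = \<theta> * integral {0..\<theta>} g + \<theta> * integral {\<theta>..tb} g"
    using c by (metis distrib_left)
  ultimately show ?thesis by (simp add: algebra_simps)
qed

lemma ftcF:
  fixes f :: "real \<Rightarrow> real"
  assumes fc: "continuous_on {0..tb} f" and "0 \<le> a" "a \<le> b" "b \<le> tb"
  shows "(f has_integral (integral {0..b} f - integral {0..a} f)) {a..b}"
proof (rule fundamental_theorem_of_calculus[OF assms(3)])
  fix x assume "x \<in> {a..b}"
  then have "((\<lambda>u. integral {0..u} f) has_vector_derivative f x) (at x within {0..tb})"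
    using assms by (intro integral_has_vector_derivative[OF fc]) auto
  then show "((\<lambda>u. integral {0..u} f) has_vector_derivative f x) (at x within {a..b})"
    by (rule has_vector_derivative_within_subset) (use assms in auto)
qed

lemma ftcFF:
  fixes f :: "real \<Rightarrow> real"
  assumes fc: "continuous_on {0..tb} f" and "0 \<le> a" "a \<le> tb"
  shows "((\<lambda>t. integral {0..t} f * f t) has_integral
           ((integral {0..tb} f)^2/2 - (integral {0..a} f)^2/2)) {a..tb}"
proof (rule fundamental_theorem_of_calculus[OF assms(3)])
  fix x assume x: "x \<in> {a..tb}"
  then have "((\<lambda>u. integral {0..u} f) has_real_derivative f x) (at x within {0..tb})"
    using assms by (intro integral_has_real_derivative[OF fc]) auto
  then have "((\<lambda>u. integral {0..u} f) has_real_derivative f x) (at x within {a..tb})"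
    by (rule DERIV_subset) (use assms in auto)
  then have "((\<lambda>u. (integral {0..u} f)^2/2) has_real_derivative (2 * integral {0..x} f * f x / 2)) (at x within {a..tb})"
    by (auto intro!: derivative_eq_intros)
  then show "((\<lambda>u. (integral {0..u} f)^2/2) has_vector_derivative integral {0..x} f * f x) (at x within {a..tb})"
    by (simp add: has_real_derivative_iff_has_vector_derivative)
qed


lemma hconst: fixes a b k :: real assumes "a \<le> b"
  shows "((\<lambda>x. k) has_integral ((b - a) * k)) {a..b}"
  using has_integral_const_real[of k a b] assms by simp

theorem mainTheorem16:
  fixes tb :: real and F f v :: "real \<Rightarrow> real"
  assumes tb_pos: "0 < tb"
    and f_cont: "continuous_on {0..tb} f"
    and f_pos: "\<forall>\<theta>\<in>{0..tb}. 0 < f \<theta>"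
    and F_def: "\<forall>\<theta>\<in>{0..tb}. F \<theta> = integral {0..\<theta>} f"
    and F_total: "F tb = 1"
    and v_nonneg: "\<forall>\<theta>\<in>{0..tb}. 0 \<le> v \<theta>"
    and v_diff: "\<forall>\<theta>\<in>{0..tb}. v differentiable (at \<theta> within {0..tb})"
  shows "((\<forall>\<theta>\<in>{0..tb}. \<forall>s\<in>S0 f tb F. U v (\<lambda>_. 1/2) \<theta> \<ge> U v s \<theta>)
            \<longleftrightarrow> (\<forall>\<theta>\<in>{0..tb}. F \<theta> \<le> \<theta> / tb))
         \<and> (mono_on {0..tb} f \<longrightarrow> (\<forall>\<theta>\<in>{0..tb}. F \<theta> \<le> \<theta> / tb))"
proof -
  have F0: "F 0 = 0" using F_def tb_pos by simp
  have Fint: "(f has_integral (F b - F a)) {a..b}" if "0 \<le> a" "a \<le> b" "b \<le> tb" for a b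
    using ftcF[OF f_cont that] F_def that by simp
  have Fmono: "F a \<le> F b" if "0 \<le> a" "a \<le> b" "b \<le> tb" for a b
  proof -
    have "0 \<le> F b - F a"
      by (rule has_integral_nonneg[OF Fint[OF that]]) (use f_pos that in \<open>auto intro: less_imp_le\<close>)
    then show ?thesis by simp
  qed
  have Fb: "0 \<le> F x \<and> F x \<le> 1" if "0 \<le> x" "x \<le> tb" for x
    using Fmono[of 0 x] Fmono[of x tb] F0 F_total that by auto
  have FF: "integral {a..tb} (\<lambda>t. F t * f t) = (1 - (F a)^2)/2" if "0 \<le> a" "a \<le> tb" for a
  proof -
    have "((\<lambda>t. integral {0..t} f * f t) has_integral
           ((integral {0..tb} f)^2/2 - (integral {0..a} f)^2/2)) {a..tb}"
      by (rule ftcFF[OF f_cont that])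
    then have "((\<lambda>t. F t * f t) has_integral ((F tb)^2/2 - (F a)^2/2)) {a..tb}"
      using F_def that tb_pos by (subst has_integral_cong[where g="\<lambda>t. integral {0..t} f * f t"]) auto
    then show ?thesis using F_total by (simp add: integral_unique diff_divide_distrib)
  qed
  have half: "integral {0..tb} (\<lambda>t. F t * f t) = 1/2" using FF[of 0] F0 tb_pos by simp
  have conj2: "mono_on {0..tb} f \<longrightarrow> (\<forall>\<theta>\<in>{0..tb}. F \<theta> \<le> \<theta> / tb)"
  proof (intro impI ballI)
    fix \<theta> assume mf: "mono_on {0..tb} f" and th: "\<theta> \<in> {0..tb}"
    have "tb * integral {0..\<theta>} f \<le> \<theta> * integral {0..tb} f"
      using cheb[OF mf] th by auto
    then have "tb * F \<theta> \<le> \<theta>" using F_def th F_total tb_pos by auto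
    then show "F \<theta> \<le> \<theta> / tb" using tb_pos by (simp add: pos_le_divide_eq mult.commute)
  qed
  have dir1: "\<forall>\<theta>\<in>{0..tb}. \<forall>s\<in>S0 f tb F. U v (\<lambda>_. 1/2) \<theta> \<ge> U v s \<theta>"
    if H: "\<forall>\<theta>\<in>{0..tb}. F \<theta> \<le> \<theta> / tb"
  proof (intro ballI)
    fix \<theta> s assume th: "\<theta> \<in> {0..tb}" and sS: "s \<in> S0 f tb F"
    have ms: "mono_on {0..tb} s" and eq: "integral {0..tb} (\<lambda>t. s t * f t) = 1/2"
      using sS half unfolding S0_def MPS_def by auto
    define w where "w = (\<lambda>x. f x - 1/tb)"
    have wi: "w integrable_on {0..tb}"
      unfolding w_def by (intro integrable_diff integrable_continuous_interval[OF f_cont]) auto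
    obtain c where c: "c \<in> {0..tb}"
      and J: "((\<lambda>x. s x * w x) has_integral (s 0 * integral {0..c} w + s tb * integral {c..tb} w)) {0..tb}"
      using second_mean_value_theorem_full[OF wi, of s] tb_pos ms by (auto simp: mono_on_def)
    have w1: "integral {0..c} w = F c - c/tb"
    proof -
      have "(w has_integral (F c - F 0 - (c - 0) * (1/tb))) {0..c}"
        unfolding w_def using c by (intro has_integral_diff Fint hconst) auto
      then show ?thesis using c F0 by (simp add: integral_unique)
    qed
    have w2: "integral {c..tb} w = (1 - F c) - (tb - c)/tb"
    proof -
      have "(w has_integral (F tb - F c - (tb - c) * (1/tb))) {c..tb}"
        unfolding w_def using c by (intro has_integral_diff Fint hconst) auto
      then show ?thesis using c F_total by (simp add: integral_unique)
    qed
    have Jv: "s 0 * integral {0..c} w + s tb * integral {c..tb} w = (s 0 - s tb) * (F c - c/tb)"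
      unfolding w1 w2 using tb_pos by (simp add: field_simps)
    have "s 0 \<le> s tb" using ms tb_pos by (auto simp: mono_on_def)
    moreover have "F c - c/tb \<le> 0" using H c by auto
    ultimately have Jpos: "0 \<le> (s 0 - s tb) * (F c - c/tb)" by (intro mult_nonpos_nonpos) auto
    have si: "s integrable_on {0..tb}" by (rule integrable_on_mono_on[OF ms])
    have "((\<lambda>x. s x * w x + s x * (1/tb)) has_integral
            ((s 0 - s tb) * (F c - c/tb) + integral {0..tb} s * (1/tb))) {0..tb}"
      using J Jv by (intro has_integral_add has_integral_mult_left integrable_integral[OF si]) auto
    moreover have "(\<lambda>x. s x * w x + s x * (1/tb)) = (\<lambda>x. s x * f x)"
      unfolding w_def by (auto simp: algebra_simps)
    ultimately have "integral {0..tb} (\<lambda>x. s x * f x) = (s 0 - s tb) * (F c - c/tb) + integral {0..tb} s / tb"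
      by (simp add: integral_unique)
    then have "integral {0..tb} s / tb \<le> 1/2" using eq Jpos by linarith
    then have I: "integral {0..tb} s \<le> tb/2" using tb_pos by (simp add: divide_le_eq)
    have "tb * integral {0..\<theta>} s \<le> \<theta> * integral {0..tb} s" using cheb[OF ms] th by auto
    also have "\<dots> \<le> \<theta> * (tb/2)" using I th by (intro mult_left_mono) auto
    finally have "integral {0..\<theta>} s \<le> \<theta>/2" using tb_pos
      by (metis (no_types, lifting) mult.commute mult_le_cancel_left_pos times_divide_eq_right)
    then show "U v (\<lambda>_. 1/2) \<theta> \<ge> U v s \<theta>" using th unfolding U_def by simp
  qed
  have dir2: "\<forall>\<theta>\<in>{0..tb}. F \<theta> \<le> \<theta> / tb"
    if L: "\<forall>\<theta>\<in>{0..tb}. \<forall>s\<in>S0 f tb F. U v (\<lambda>_. 1/2) \<theta> \<ge> U v s \<theta>"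
  proof (rule ccontr)
    assume "\<not> (\<forall>\<theta>\<in>{0..tb}. F \<theta> \<le> \<theta> / tb)"
    then obtain t0 where t0: "t0 \<in> {0..tb}" and gt: "F t0 > t0 / tb" by (auto simp: not_le)
    define q where "q = F t0"
    have q01: "0 \<le> q" "q \<le> 1" using Fb t0 q_def by auto
    have t0pos: "0 < t0" using gt F0 t0 by (cases "t0 = 0") auto
    have qtb: "q * tb > t0" using gt tb_pos q_def by (simp add: divide_less_eq)
    define s where "s = (\<lambda>x::real. if x < t0 then q/2 else (1+q)/2)"
    have sint: "((\<lambda>t. s t * f t) has_integral
        (if x < t0 then (1 - q * F x)/2 else (1+q)*(1 - F x)/2)) {x..tb}"
      if x: "0 \<le> x" "x \<le> tb" for x
    proof (cases "x < t0")
      case True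
      have a1: "((\<lambda>t. s t * f t) has_integral (q/2 * (F t0 - F x))) {x..t0}"
      proof (rule has_integral_spike_finite[of "{t0}", where f="\<lambda>t. q/2 * f t"])
        show "((\<lambda>t. q/2 * f t) has_integral (q/2 * (F t0 - F x))) {x..t0}"
          using True x t0 by (intro has_integral_mult_right Fint) auto
      qed (auto simp: s_def)
      have a2: "((\<lambda>t. s t * f t) has_integral ((1+q)/2 * (F tb - F t0))) {t0..tb}"
      proof -
        have "((\<lambda>t. (1+q)/2 * f t) has_integral ((1+q)/2 * (F tb - F t0))) {t0..tb}"
          using t0pos t0 by (intro has_integral_mult_right Fint) auto
        then show ?thesis by (subst has_integral_cong[where g="\<lambda>t. (1+q)/2 * f t"]) (auto simp: s_def)
      qed
      have "((\<lambda>t. s t * f t) has_integral (q/2 * (F t0 - F x) + (1+q)/2 * (F tb - F t0))) {x..tb}"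
        using True t0 by (intro has_integral_combine[OF _ _ a1 a2]) auto
      moreover have "q/2 * (F t0 - F x) + (1+q)/2 * (F tb - F t0) = (1 - q * F x)/2"
        using F_total q_def by (simp add: field_simps)
      ultimately have "((\<lambda>t. s t * f t) has_integral ((1 - q * F x)/2)) {x..tb}" by metis
      then show ?thesis using True by simp
    next
      case False
      have "((\<lambda>t. (1+q)/2 * f t) has_integral ((1+q)/2 * (F tb - F x))) {x..tb}"
        using x by (intro has_integral_mult_right Fint) auto
      then have "((\<lambda>t. s t * f t) has_integral ((1+q)/2 * (F tb - F x))) {x..tb}"
        using False by (subst has_integral_cong[where g="\<lambda>t. (1+q)/2 * f t"]) (auto simp: s_def)
      then show ?thesis using False F_total by simp
    qed
    have sS: "s \<in> S0 f tb F"
      unfolding S0_def MPS_def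
    proof (intro CollectI conjI ballI)
      show "mono_on {0..tb} s" by (auto simp: mono_on_def s_def)
      fix x assume x: "x \<in> {0..tb}"
      show "0 \<le> s x" "s x \<le> 1" using q01 by (auto simp: s_def)
      have Fx: "0 \<le> F x" "F x \<le> 1" using Fb x by auto
      show "integral {x..tb} (\<lambda>t. s t * f t) \<le> integral {x..tb} (\<lambda>t. F t * f t)"
      proof (cases "x < t0")
        case True
        have "F x \<le> q" using Fmono[of x t0] True x t0 q_def by auto
        then have p: "F x * F x \<le> q * F x" using Fx by (intro mult_right_mono) auto
        have i1: "integral {x..tb} (\<lambda>t. s t * f t) = (1 - q * F x)/2"
          using integral_unique[OF sint[of x]] x True by simp
        have i2: "integral {x..tb} (\<lambda>t. F t * f t) = (1 - F x * F x)/2"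
          using FF[of x] x by (simp add: power2_eq_square)
        show ?thesis unfolding i1 i2 by (intro divide_right_mono diff_left_mono p) simp
      next
        case False
        have "q \<le> F x" using Fmono[of t0 x] False x t0 q_def by auto
        then have "(1 - F x) * q \<le> (1 - F x) * F x" using Fx by (intro mult_left_mono) auto
        then have p: "q - q * F x \<le> F x - F x * F x" by (simp add: algebra_simps)
        have i1: "integral {x..tb} (\<lambda>t. s t * f t) = (1 - F x + q - q * F x)/2"
          using integral_unique[OF sint[of x]] x False by (simp add: algebra_simps)
        have i2: "integral {x..tb} (\<lambda>t. F t * f t) = (1 - F x * F x)/2"
          using FF[of x] x by (simp add: power2_eq_square)
        show ?thesis unfolding i1 i2 by (intro divide_right_mono) (use p in linarith, simp)
      qed
    next
      show "integral {0..tb} (\<lambda>t. s t * f t) = integral {0..tb} (\<lambda>t. F t * f t)"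
        using integral_unique[OF sint[of 0]] half t0pos tb_pos F0 by simp
    qed
    have b1: "(s has_integral ((t0 - 0) * (q/2))) {0..t0}"
      by (rule has_integral_spike_finite[of "{t0}", where f="\<lambda>_. q/2"]) (use t0 hconst[of 0 t0 "q/2"] in \<open>auto simp: s_def\<close>)
    have b2: "(s has_integral ((tb - t0) * ((1+q)/2))) {t0..tb}"
      by (subst has_integral_cong[where g="\<lambda>_. (1+q)/2"]) (use t0 t0pos hconst[of t0 tb "(1+q)/2"] in \<open>auto simp: s_def\<close>)
    have "(s has_integral (t0 * (q/2) + (tb - t0) * ((1+q)/2))) {0..tb}"
      using has_integral_combine[OF _ _ b1 b2] t0 t0pos by auto
    then have Is: "integral {0..tb} s = t0 * (q/2) + (tb - t0) * ((1+q)/2)" by (rule integral_unique)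
    have "U v s tb \<le> U v (\<lambda>_. 1/2) tb" using L sS tb_pos by auto
    then have le: "t0 * (q/2) + (tb - t0) * ((1+q)/2) \<le> tb/2" using tb_pos Is unfolding U_def by simp
    have e: "t0 * (q/2) + (tb - t0) * ((1+q)/2) = tb/2 + (q*tb - t0)/2" by (simp add: field_simps)
    have "tb/2 + (q*tb - t0)/2 \<le> tb/2" using le unfolding e .
    then have "q*tb - t0 \<le> 0" by simp
    then show False using qtb by simp
  qed
  show ?thesis using dir1 dir2 conj2 by blast
qed

end
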